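(* Let $n \in \mathbb{N}$ and work in $\mathbb{Z}_n$. Let $A_0, B_0$ be non-empty disjoint integer intervals contained in $\left(\frac{n}{8}, \frac{n}{4}\right)$ with $A_0 < B_0$. Let $B_1 \subseteq B_0$ be an integer interval, and set $A = A_0 \cup A_0^{-1}$ and $B = B_0 \cup B_0^{-1} \cup 2B_1 \cup 2B_1^{-1}$. Then $(A + B) \cap A = \emptyset$. Moreover, if $n$ is even then $\left(A + \left\{\frac{n}{2}\right\}\right) \cap A = \emptyset$, and if furthermore $\min(B_1) \geq \frac{3n}{16}$ then $\left(\left\{\frac{n}{2}\right\} + B\right) \cap A = \emptyset$.
   Context: In $\mathbb{Z}_n$ (integers under addition mod $n$), for subsets $X,Y$: $X+Y=\{x+y: x\in X, y\in Y\}$, $2X=X+X$, and $X^{-1}=\{-x: x\in X\}$ (so $2B_1^{-1}$ is $2(B_1^{-1})$, the set of negatives of elements of $2B_1$). $X<Y$ means $(x \bmod n)<(y\bmod n)$ for all $x\in X$, $y\in Y$. An integer interval in $\left(\frac n8,\frac n4\right)$ is a set of consecutive integers lying strictly between $n/8$ and $n/4$, viewed as residues mod $n$. *)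

theory Defs
  imports Complex_Main
begin

text \<open>Residues of Z_n are represented by integers in {0..<n}; all operations reduce mod n.\<close>

definition zsum :: "int \<Rightarrow> int set \<Rightarrow> int set \<Rightarrow> int set" where
  "zsum n X Y = {(x + y) mod n | x y. x \<in> X \<and> y \<in> Y}"

definition zneg :: "int \<Rightarrow> int set \<Rightarrow> int set" where
  "zneg n X = {(- x) mod n | x. x \<in> X}"

definition zdbl :: "int \<Rightarrow> int set \<Rightarrow> int set" where
  "zdbl n X = zsum n X X"

end

theory Submission
  imports Defs
begin

lemma mod_cases2:
  fixes u v N :: int
  assumes "0 \<le> u" "u < N" "0 \<le> v" "v < N"
  shows "(u + v) mod N = u + v \<or> (u + v) mod N = u + v - N"
proof (cases "u + v < N")
  case True then show ?thesis using assms by simp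
next
  case False
  have "(u + v) mod N = ((u + v - N) + N) mod N" by simp
  also have "\<dots> = (u + v - N) mod N" by (rule mod_add_self2)
  finally have "(u + v) mod N = (u + v - N) mod N" .
  also have "\<dots> = u + v - N" using assms False by (intro mod_pos_pos_trivial) linarith+
  finally show ?thesis by simp
qed

lemma zsum_mem:
  "x \<in> zsum N X Y \<longleftrightarrow> (\<exists>u\<in>X. \<exists>v\<in>Y. x = (u + v) mod N)"
  unfolding zsum_def by blast

lemma negI:
  fixes s N :: int
  assumes "0 < s" "s < N"
  shows "(- s) mod N = N - s"
proof -
  have "(- s) mod N = ((N - s) + (-1) * N) mod N" by simp
  also have "\<dots> = (N - s) mod N" by (rule mod_mult_self1)
  also have "\<dots> = N - s" using assms by (intro mod_pos_pos_trivial) linarith+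
  finally show ?thesis .
qed

lemma zneg_eq:
  assumes "\<forall>s\<in>S. 0 < s \<and> s < N"
  shows "zneg N S = (\<lambda>s. N - s) ` S"
  unfolding zneg_def Setcompr_eq_image
  by (rule image_cong) (use assms negI in auto)

lemma main_int:
  fixes N a0 a1 b0 b1 c0 c1 :: int
  assumes h: "a0 \<le> a1" "b0 \<le> b1" "N < 8 * a0" "4 * a1 < N" "N < 8 * b0" "4 * b1 < N"
    "a1 < b0" "c0 \<le> c1 \<longrightarrow> b0 \<le> c0 \<and> c1 \<le> b1"
  defines "A \<equiv> {a0..a1} \<union> zneg N {a0..a1}"
    and "B \<equiv> {b0..b1} \<union> zneg N {b0..b1} \<union> zdbl N {c0..c1}
              \<union> zneg N (zdbl N {c0..c1})"
  shows "zsum N A B \<inter> A = {}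
         \<and> (even N \<longrightarrow> zsum N A {N div 2} \<inter> A = {})
         \<and> (even N \<and> (\<forall>c. c0 \<le> c \<and> c \<le> c1 \<longrightarrow> 3 * N \<le> 16 * c)
              \<longrightarrow> zsum N {N div 2} B \<inter> A = {})"
proof -
  have Achar: "A = {a0..a1} \<union> (\<lambda>s. N - s) ` {a0..a1}"
    unfolding A_def using h by (subst zneg_eq) auto
  define D where "D = {x. \<exists>u v. c0 \<le> u \<and> u \<le> c1 \<and> c0 \<le> v \<and> v \<le> c1 \<and> x = u + v}"
  have dbl: "zdbl N {c0..c1} = D"
    unfolding zdbl_def zsum_def D_def
  proof (intro set_eqI iffI)
    fix x assume "x \<in> {(u + v) mod N |u v. u \<in> {c0..c1} \<and> v \<in> {c0..c1}}"
    then obtain u v where uv: "u \<in> {c0..c1}" "v \<in> {c0..c1}" "x = (u + v) mod N" by blast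
    then have "x = u + v" using h by simp
    then show "x \<in> {x. \<exists>u v. c0 \<le> u \<and> u \<le> c1 \<and> c0 \<le> v \<and> v \<le> c1 \<and> x = u + v}"
      using uv by auto
  next
    fix x assume "x \<in> {x. \<exists>u v. c0 \<le> u \<and> u \<le> c1 \<and> c0 \<le> v \<and> v \<le> c1 \<and> x = u + v}"
    then obtain u v where uv: "u \<in> {c0..c1}" "v \<in> {c0..c1}" "x = u + v" by auto
    then have "x = (u + v) mod N" using h by simp
    then show "x \<in> {(u + v) mod N |u v. u \<in> {c0..c1} \<and> v \<in> {c0..c1}}" using uv by blast
  qed
  have Bchar: "B = {b0..b1} \<union> (\<lambda>s. N - s) ` {b0..b1} \<union> D
     \<union> (\<lambda>s. N - s) ` D"
    unfolding B_def dbl using h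
    by (subst zneg_eq, force, subst zneg_eq) (auto simp: D_def)
  have Ar: "0 \<le> x \<and> x < N" if "x \<in> A" for x using that h unfolding Achar by auto
  have Br: "0 \<le> x \<and> x < N" if "x \<in> B" for x using that h unfolding Bchar D_def by auto
  have hN: "0 \<le> N div 2 \<and> N div 2 < N" using h by auto
  show ?thesis
  proof (intro conjI impI)
    show "zsum N A B \<inter> A = {}"
    proof (rule ccontr)
      assume "zsum N A B \<inter> A \<noteq> {}"
      then obtain x where "x \<in> zsum N A B" "x \<in> A" by blast
      then obtain u v where x: "x \<in> A" "u \<in> A" "v \<in> B" "x = (u + v) mod N"
        unfolding zsum_mem by blast
      then have "x = u + v \<or> x = u + v - N" using mod_cases2 Ar Br by blast
      then show False using x h unfolding Achar Bchar D_def by auto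
    qed
  next
    assume ev: "even N"
    then obtain m where m: "N = 2 * m" by auto
    show "zsum N A {N div 2} \<inter> A = {}"
    proof (rule ccontr)
      assume "zsum N A {N div 2} \<inter> A \<noteq> {}"
      then obtain x where "x \<in> zsum N A {N div 2}" "x \<in> A" by blast
      then obtain u v where x: "x \<in> A" "u \<in> A" "v = N div 2" "x = (u + v) mod N"
        unfolding zsum_mem by blast
      then have "x = u + v \<or> x = u + v - N" using mod_cases2 Ar hN by blast
      then show False using x h m unfolding Achar by auto
    qed
  next
    assume ev: "even N \<and> (\<forall>c. c0 \<le> c \<and> c \<le> c1 \<longrightarrow> 3 * N \<le> 16 * c)"
    then obtain m where m: "N = 2 * m" by auto
    show "zsum N {N div 2} B \<inter> A = {}"
    proof (rule ccontr)
      assume "zsum N {N div 2} B \<inter> A \<noteq> {}"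
      then obtain x where "x \<in> zsum N {N div 2} B" "x \<in> A" by blast
      then obtain u v where x: "x \<in> A" "u = N div 2" "v \<in> B" "x = (u + v) mod N"
        unfolding zsum_mem by blast
      then have "x = u + v \<or> x = u + v - N" using mod_cases2 Br hN by blast
      then show False using x h m ev unfolding Achar Bchar D_def by auto
    qed
  qed
qed

theorem lemma3p2:
  fixes n :: nat and a0 a1 b0 b1 c0 c1 :: int
  assumes "a0 \<le> a1" and "b0 \<le> b1"
    and "real n / 8 < real_of_int a0" and "real_of_int a1 < real n / 4"
    and "real n / 8 < real_of_int b0" and "real_of_int b1 < real n / 4"
    and "\<forall>x\<in>{a0..a1}. \<forall>y\<in>{b0..b1}. x < y"
    and "{c0..c1} \<subseteq> {b0..b1}"
  defines "A \<equiv> {a0..a1} \<union> zneg (int n) {a0..a1}"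
    and "B \<equiv> {b0..b1} \<union> zneg (int n) {b0..b1} \<union> zdbl (int n) {c0..c1}
              \<union> zneg (int n) (zdbl (int n) {c0..c1})"
  shows "zsum (int n) A B \<inter> A = {}
         \<and> (even n \<longrightarrow> zsum (int n) A {int n div 2} \<inter> A = {})
         \<and> (even n \<and> (\<forall>x\<in>{c0..c1}. 3 * real n / 16 \<le> real_of_int x)
              \<longrightarrow> zsum (int n) {int n div 2} B \<inter> A = {})"
proof -
  have r: "real_of_int (int n) = real n" by simp
  have i3: "int n < 8 * a0"
  proof -
    have "real_of_int (int n) < real_of_int (8 * a0)" using assms(3) by simp
    then show ?thesis by (simp only: of_int_less_iff)
  qed
  have i4: "4 * a1 < int n"
  proof -
    have "real_of_int (4 * a1) < real_of_int (int n)" using assms(4) by simp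
    then show ?thesis by (simp only: of_int_less_iff)
  qed
  have i5: "int n < 8 * b0"
  proof -
    have "real_of_int (int n) < real_of_int (8 * b0)" using assms(5) by simp
    then show ?thesis by (simp only: of_int_less_iff)
  qed
  have i6: "4 * b1 < int n"
  proof -
    have "real_of_int (4 * b1) < real_of_int (int n)" using assms(6) by simp
    then show ?thesis by (simp only: of_int_less_iff)
  qed
  have i7: "a1 < b0" using assms(1,2,7) by auto
  have i8: "c0 \<le> c1 \<longrightarrow> b0 \<le> c0 \<and> c1 \<le> b1" using assms(8) by auto
  have M: "zsum (int n) A B \<inter> A = {}
         \<and> (even (int n) \<longrightarrow> zsum (int n) A {int n div 2} \<inter> A = {})
         \<and> (even (int n) \<and> (\<forall>c. c0 \<le> c \<and> c \<le> c1 \<longrightarrow> 3 * int n \<le> 16 * c)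
              \<longrightarrow> zsum (int n) {int n div 2} B \<inter> A = {})"
    unfolding A_def B_def
    by (rule main_int[OF assms(1,2) i3 i4 i5 i6 i7 i8])
  have c16: "3 * int n \<le> 16 * c" if "\<forall>x\<in>{c0..c1}. 3 * real n / 16 \<le> real_of_int x"
    "c0 \<le> c" "c \<le> c1" for c
  proof -
    have "3 * real n / 16 \<le> real_of_int c" using that by auto
    then have "real_of_int (3 * int n) \<le> real_of_int (16 * c)" by simp
    then show ?thesis by (simp only: of_int_le_iff)
  qed
  show ?thesis using M c16 by auto
qed

end
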